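(* Let $f\colon\Delta\to\Delta$ be a Bernoulli Young tower with $\mathbb P_{\mathcal A}(h_{\mathcal A}=n)=\theta(1-\theta)^{n-1}$ for all $n\ge1$, for some $0<\theta<1$, and let $D,\mathbb P_D$, $g\colon D\to\Delta$ and $D_k(x)$ be as in the context. Fix $p>2$ and let $$\delta_{k,p}=\int_D\sup_{x'\in D_k(x)}d^p(g(x),g(x'))\,d\mathbb P_D(x).$$ Then there exist $C_\delta>0$ and $0<\theta_\delta<1$ such that $\delta_{k,p}\le C_\delta\theta_\delta^{|k|}$ for all $k\in\mathbb Z$.
   Context: Bernoulli Young tower: given an at most countable probability space $(\mathcal{A},\mathbb{P}_{\mathcal A})$, an integrable $h_{\mathcal A}\colon\mathcal A\to\mathbb N$ and $0<\xi<1$, let $(X,\mathbb P_X)=(\mathcal A^{\mathbb N},\mathbb P_{\mathcal A}^{\mathbb N})$ with left shift $f_X$, $h(a_0,a_1,\dots)=h_{\mathcal A}(a_0)$, $\Delta=\{(x,\ell)\in X\times\mathbb Z:0\le\ell<h(x)\}$, $f(x,\ell)=(x,\ell+1)$ if $\ell<h(x)-1$ and $f(x,\ell)=(f_Xx,0)$ if $\ell=h(x)-1$. On $X$, $d(x,y)=\xi^{s(x,y)}$ with $s((a_j),(b_j))=\inf\{j\ge0:a_j\ne b_j\}$; on $\Delta$, $d((x,k),(y,j))=1$ if $k\ne j$ and $=d(x,y)$ if $k=j$. Construction: let $(\Omega,\mathbb P_\Omega)$ be a probability space carrying random variables $A_n\colon\Omega\to\mathcal A$, $n\ge1$, with $\mathbb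 P(A_n=a)=\mathbb P_{\mathcal A}(a)/\mathbb P_{\mathcal A}(h_{\mathcal A}=n)$ if $h_{\mathcal A}(a)=n$ and $0$ otherwise. Let $Z=\{0,1\}$ with $\mathbb P_Z(1)=\theta$, $\mathbb P_Z(0)=1-\theta$, $D=\Omega^{\mathbb Z}\times Z^{\mathbb Z}$ with $\mathbb P_D=\mathbb P_\Omega^{\mathbb Z}\times\mathbb P_Z^{\mathbb Z}$. For $x=((\omega_j)_{j\in\mathbb Z},(z_j)_{j\in\mathbb Z})\in D$ let $t_0(x)=\sup\{k\le0:z_k=1\}$ and $t_n(x)=\inf\{k>t_{n-1}(x):z_k=1\}$ for $n\ge1$ (finite a.s.). Define $g(x)=(y,-t_0(x))$ with $y=(A_{t_1-t_0}(\omega_{t_0}),A_{t_2-t_1}(\omega_{t_1}),\dots)\in X$. For $k\in\mathbb Z$, $D_k(x)$ is the set of $x'=((\omega'_j),(z'_j))\in D$ with $\omega'_j=\omega_j$ and $z'_j=z_j$ for all $j\ne k$. *)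

theory Defs
  imports "HOL-Probability.Probability"
begin

definition dX :: "real \<Rightarrow> (nat \<Rightarrow> 'a) \<Rightarrow> (nat \<Rightarrow> 'a) \<Rightarrow> real" where
  "dX xi x y = (if x = y then 0 else xi ^ (LEAST j. x j \<noteq> y j))"

definition dDelta :: "real \<Rightarrow> (nat \<Rightarrow> 'a) \<times> int \<Rightarrow> (nat \<Rightarrow> 'a) \<times> int \<Rightarrow> real" where
  "dDelta xi u v = (if snd u \<noteq> snd v then 1 else dX xi (fst u) (fst v))"

fun tseq :: "(int \<Rightarrow> bool) \<Rightarrow> nat \<Rightarrow> int" where
  "tseq z 0 = (GREATEST k. k \<le> 0 \<and> z k)"
| "tseq z (Suc n) = (LEAST k. k > tseq z n \<and> z k)"

definition gmap :: "(nat \<Rightarrow> 'o \<Rightarrow> 'a) \<Rightarrow> (int \<Rightarrow> 'o) \<times> (int \<Rightarrow> bool) \<Rightarrow> (nat \<Rightarrow> 'a) \<times> int" where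
  "gmap A x = (let \<omega> = fst x; z = snd x in
     ((\<lambda>j. A (nat (tseq z (Suc j) - tseq z j)) (\<omega> (tseq z j))), - tseq z 0))"

text \<open>The probability space (D, P_D) = (Omega^Z x Z^Z, P_Omega^Z x P_Z^Z), Z = {0,1} ~ bool.\<close>
definition PD :: "'o measure \<Rightarrow> real \<Rightarrow> ((int \<Rightarrow> 'o) \<times> (int \<Rightarrow> bool)) measure" where
  "PD M \<theta> = (\<Pi>\<^sub>M j\<in>(UNIV::int set). M) \<Otimes>\<^sub>M (\<Pi>\<^sub>M j\<in>(UNIV::int set). measure_pmf (bernoulli_pmf \<theta>))"

definition Dk :: "'o measure \<Rightarrow> real \<Rightarrow> int \<Rightarrow> (int \<Rightarrow> 'o) \<times> (int \<Rightarrow> bool)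
    \<Rightarrow> ((int \<Rightarrow> 'o) \<times> (int \<Rightarrow> bool)) set" where
  "Dk M \<theta> k x = {x' \<in> space (PD M \<theta>). \<forall>j. j \<noteq> k \<longrightarrow> fst x' j = fst x j \<and> snd x' j = snd x j}"

definition delta :: "real \<Rightarrow> real \<Rightarrow> 'o measure \<Rightarrow> real \<Rightarrow> (nat \<Rightarrow> 'o \<Rightarrow> 'a) \<Rightarrow> int \<Rightarrow> ennreal" where
  "delta xi p M \<theta> A k = (\<integral>\<^sup>+ x. (SUP x'\<in>Dk M \<theta> k x. ennreal ((dDelta xi (gmap A x) (gmap A x')) powr p)) \<partial>PD M \<theta>)"

end

theory Submission
  imports Defs
begin


abbreviation "BZ \<theta> \<equiv> (\<Pi>\<^sub>M j\<in>(UNIV::int set). measure_pmf (bernoulli_pmf \<theta>))"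

lemma int_prod:
  fixes w :: "bool \<Rightarrow> ennreal" and J :: "int set"
  assumes "finite J" "0 \<le> \<theta>" "\<theta> \<le> 1"
  shows "(\<integral>\<^sup>+z. (\<Prod>j\<in>J. w (z j)) \<partial>BZ \<theta>) = (\<Prod>j\<in>J. w True * ennreal \<theta> + w False * ennreal (1 - \<theta>))"
proof -
  interpret product_prob_space "\<lambda>_. measure_pmf (bernoulli_pmf \<theta>)" "UNIV::int set"
    by unfold_locales (simp add: prob_space_measure_pmf)
  have "(\<integral>\<^sup>+z. (\<Prod>j\<in>J. w (z j)) \<partial>BZ \<theta>) = (\<integral>\<^sup>+z. (\<Prod>j\<in>J. w (restrict z J j)) \<partial>BZ \<theta>)"
    by (intro nn_integral_cong prod.cong) auto
  also have "\<dots> = (\<integral>\<^sup>+z. (\<Prod>j\<in>J. w (z j)) \<partial>distr (BZ \<theta>) (\<Pi>\<^sub>M j\<in>J. measure_pmf (bernoulli_pmf \<theta>)) (\<lambda>x. restrict x J))"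
    by (subst nn_integral_distr) (auto intro!: measurable_restrict_subset)
  also have "\<dots> = (\<integral>\<^sup>+z. (\<Prod>j\<in>J. w (z j)) \<partial>(\<Pi>\<^sub>M j\<in>J. measure_pmf (bernoulli_pmf \<theta>)))"
    by (subst distr_PiM_restrict_finite) (use assms in auto)
  also have "\<dots> = (\<Prod>j\<in>J. \<integral>\<^sup>+b. w b \<partial>bernoulli_pmf \<theta>)"
    by (rule product_nn_integral_prod) (use assms in auto)
  also have "\<dots> = (\<Prod>j\<in>J. w True * ennreal \<theta> + w False * ennreal (1 - \<theta>))"
    by (subst nn_integral_measure_pmf_support[of UNIV]) (auto simp: UNIV_bool assms add.commute)
  finally show ?thesis .
qed

lemma int_pair:
  assumes "prob_space M" and G[measurable]: "G \<in> borel_measurable (BZ \<theta>)"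
  shows "(\<integral>\<^sup>+x. G (snd x) \<partial>PD M \<theta>) = (\<integral>\<^sup>+z. G z \<partial>BZ \<theta>)"
proof -
  interpret M: prob_space M by fact
  interpret P1: product_prob_space "\<lambda>_. M" "UNIV::int set"
    by unfold_locales
  interpret P2: product_prob_space "\<lambda>_. measure_pmf (bernoulli_pmf \<theta>)" "UNIV::int set"
    by unfold_locales (simp add: prob_space_measure_pmf)
  interpret pair_sigma_finite "\<Pi>\<^sub>M j\<in>(UNIV::int set). M" "BZ \<theta>" by unfold_locales
  have "(\<integral>\<^sup>+x. G (snd x) \<partial>PD M \<theta>) = (\<integral>\<^sup>+ y. (\<integral>\<^sup>+ x. G y \<partial>(\<Pi>\<^sub>M j\<in>(UNIV::int set). M)) \<partial>BZ \<theta>)"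
    unfolding PD_def by (subst nn_integral_snd[symmetric]) auto
  also have "\<dots> = (\<integral>\<^sup>+z. G z \<partial>BZ \<theta>)"
    by (simp add: P1.emeasure_space_1)
  finally show ?thesis .
qed


lemma least_int:
  fixes P :: "int \<Rightarrow> bool"
  assumes "P w" "\<And>j. P j \<Longrightarrow> t < j"
  shows "P (Least P) \<and> (\<forall>j. P j \<longrightarrow> Least P \<le> j)"
proof -
  define S where "S = {j. P j \<and> j \<le> w}"
  have fin: "finite S" by (rule finite_subset[of _ "{t<..w}"]) (auto simp: S_def assms(2))
  have ne: "w \<in> S" using assms by (auto simp: S_def)
  define m where "m = Min S"
  have m1: "P m" "m \<le> w" using Min_in[OF fin] ne by (auto simp: m_def S_def)
  have m2: "\<And>j. P j \<Longrightarrow> m \<le> j"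
  proof -
    fix j assume "P j"
    show "m \<le> j"
    proof (cases "j \<le> w")
      case True then show ?thesis using \<open>P j\<close> fin by (auto simp: m_def S_def)
    next
      case False then show ?thesis using m1 by auto
    qed
  qed
  have "Least P = m" by (rule Least_equality) (use m1 m2 in auto)
  then show ?thesis using m1 m2 by auto
qed

lemma greatest_int:
  fixes P :: "int \<Rightarrow> bool"
  assumes "P w" "\<And>j. P j \<Longrightarrow> j \<le> t"
  shows "P (Greatest P) \<and> (\<forall>j. P j \<longrightarrow> j \<le> Greatest P)"
proof -
  define S where "S = {j. P j \<and> w \<le> j}"
  have fin: "finite S" by (rule finite_subset[of _ "{w..t}"]) (auto simp: S_def assms(2))
  have ne: "w \<in> S" using assms by (auto simp: S_def)
  define m where "m = Max S"
  have m1: "P m" "w \<le> m" using Max_in[OF fin] ne by (auto simp: m_def S_def)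
  have m2: "\<And>j. P j \<Longrightarrow> j \<le> m"
  proof -
    fix j assume "P j"
    show "j \<le> m"
    proof (cases "w \<le> j")
      case True then show ?thesis using \<open>P j\<close> fin by (auto simp: m_def S_def)
    next
      case False then show ?thesis using m1 by auto
    qed
  qed
  have "Greatest P = m" by (rule Greatest_equality) (use m1 m2 in auto)
  then show ?thesis using m1 m2 by auto
qed

lemma dX_le:
  assumes "0 \<le> xi" "xi \<le> 1" "\<forall>j<n. y j = y' j"
  shows "dX xi y y' \<le> xi ^ n"
proof (cases "y = y'")
  case True then show ?thesis using assms by (simp add: dX_def)
next
  case False
  then obtain j0 where "y j0 \<noteq> y' j0" by auto
  then have "y (LEAST j. y j \<noteq> y' j) \<noteq> y' (LEAST j. y j \<noteq> y' j)" by (rule LeastI)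
  then have "\<not> (LEAST j. y j \<noteq> y' j) < n" using assms(3) by auto
  then have "xi ^ (LEAST j. y j \<noteq> y' j) \<le> xi ^ n"
    using assms by (intro power_decreasing) auto
  then show ?thesis using False by (simp add: dX_def)
qed

lemma tseq_neg:
  assumes "k < 0" "\<forall>j. j \<noteq> k \<longrightarrow> z' j = z j" "k < w0" "w0 \<le> 0" "z w0" "\<forall>m. \<exists>j>m. z j"
  shows "tseq z' n = tseq z n \<and> k < tseq z n"
proof (induction n)
  case 0
  let ?P = "\<lambda>j. j \<le> 0 \<and> z j"
  have g: "?P (Greatest ?P) \<and> (\<forall>j. ?P j \<longrightarrow> j \<le> Greatest ?P)"
    by (rule greatest_int[of _ w0 0]) (use assms in auto)
  have gk: "k < Greatest ?P" using g assms by force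
  have "(GREATEST j. j \<le> 0 \<and> z' j) = Greatest ?P"
  proof (rule Greatest_equality)
    show "Greatest ?P \<le> 0 \<and> z' (Greatest ?P)" using g gk assms(2) by auto
    fix y assume "y \<le> 0 \<and> z' y"
    then show "y \<le> Greatest ?P" using g gk assms(2) by (cases "y = k") auto
  qed
  then show ?case using gk by simp
next
  case (Suc n)
  let ?t = "tseq z n"
  have eq: "(\<lambda>j. ?t < j \<and> z' j) = (\<lambda>j. ?t < j \<and> z j)"
    using Suc assms(2) by (auto intro!: ext)
  obtain w where w: "w > ?t" "z w" using assms(6) by blast
  have l: "?t < (LEAST j. ?t < j \<and> z j)"
    using least_int[of "\<lambda>j. ?t < j \<and> z j" w ?t] w by auto
  show ?case using Suc eq l by simp
qed

definition cnt :: "(int \<Rightarrow> bool) \<Rightarrow> int \<Rightarrow> nat" where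
  "cnt z t = card {j. 0 < j \<and> j \<le> t \<and> z j}"

lemma tseq_pos:
  assumes "0 < k" "\<forall>j. j \<noteq> k \<longrightarrow> z' j = z j" "w0 \<le> 0" "z w0"
  shows "n \<le> cnt z (k - 1) \<Longrightarrow> tseq z' n = tseq z n \<and> tseq z n < k \<and> cnt z (tseq z n) \<le> n"
proof (induction n)
  case 0
  let ?P = "\<lambda>j. j \<le> 0 \<and> z j"
  have g: "?P (Greatest ?P) \<and> (\<forall>j. ?P j \<longrightarrow> j \<le> Greatest ?P)"
    by (rule greatest_int[of _ w0 0]) (use assms in auto)
  have eq: "(\<lambda>j. j \<le> 0 \<and> z' j) = ?P" using assms by (auto intro!: ext)
  have "{j. 0 < j \<and> j \<le> Greatest ?P \<and> z j} = {}" using g by auto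
  then have "cnt z (Greatest ?P) = 0" unfolding cnt_def by (metis card.empty)
  then show ?case using eq g assms(1) by simp
next
  case (Suc n)
  let ?t = "tseq z n"
  have IH: "tseq z' n = ?t" "?t < k" "cnt z ?t \<le> n" using Suc by auto
  have "\<exists>w. ?t < w \<and> w \<le> k - 1 \<and> z w"
  proof (rule ccontr)
    assume "\<not> ?thesis"
    then have "{j. 0 < j \<and> j \<le> k - 1 \<and> z j} = {j. 0 < j \<and> j \<le> ?t \<and> z j}"
      using IH(2) by force
    then have "cnt z (k - 1) = cnt z ?t" by (simp add: cnt_def)
    then show False using IH(3) Suc.prems by simp
  qed
  then obtain w where w: "?t < w" "w \<le> k - 1" "z w" by blast
  let ?P = "\<lambda>j. ?t < j \<and> z j"
  have l: "?P (Least ?P) \<and> (\<forall>j. ?P j \<longrightarrow> Least ?P \<le> j)"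
    by (rule least_int[of _ w ?t]) (use w in auto)
  have Lk: "Least ?P < k" using l w by force
  have eq: "(LEAST j. ?t < j \<and> z' j) = Least ?P"
  proof (rule Least_equality)
    show "?t < Least ?P \<and> z' (Least ?P)" using l Lk assms(2) by auto
    fix y assume "?t < y \<and> z' y"
    then show "Least ?P \<le> y" using l Lk assms(2) by (cases "y = k") auto
  qed
  have sub: "{j. 0 < j \<and> j \<le> Least ?P \<and> z j} \<subseteq> insert (Least ?P) {j. 0 < j \<and> j \<le> ?t \<and> z j}"
  proof
    fix j assume j: "j \<in> {j. 0 < j \<and> j \<le> Least ?P \<and> z j}"
    show "j \<in> insert (Least ?P) {j. 0 < j \<and> j \<le> ?t \<and> z j}"
    proof (cases "j \<le> ?t")
      case False then have "Least ?P \<le> j" using l j by auto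
      then show ?thesis using j by auto
    qed (use j in auto)
  qed
  have fin: "finite {j. 0 < j \<and> j \<le> ?t \<and> z j}"
    by (rule finite_subset[of _ "{0<..?t}"]) auto
  have "cnt z (Least ?P) \<le> card (insert (Least ?P) {j. 0 < j \<and> j \<le> ?t \<and> z j})"
    unfolding cnt_def by (rule card_mono) (use fin sub in auto)
  also have "\<dots> \<le> Suc (cnt z ?t)" unfolding cnt_def by (rule card_insert_le_m1) (auto simp: fin)
  finally have "cnt z (Least ?P) \<le> Suc n" using IH(3) by simp
  then show ?case using IH eq Lk by simp
qed



definition Fk :: "real \<Rightarrow> real \<Rightarrow> int \<Rightarrow> (int \<Rightarrow> bool) \<Rightarrow> ennreal" where
  "Fk xi p k z = (if k < 0 then (\<Prod>j\<in>{k<..0}. (if z j then 0 else 1))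
     else if 0 < k then (\<Prod>j\<in>{0<..<k}. (if z j then ennreal (xi powr p) else 1)) else 1)"

lemma dDelta_01: "0 \<le> xi \<Longrightarrow> xi \<le> 1 \<Longrightarrow> 0 \<le> dDelta xi u v \<and> dDelta xi u v \<le> 1"
  by (auto simp: dDelta_def dX_def power_le_one)

lemma powr_le_1: "0 \<le> d \<Longrightarrow> d \<le> 1 \<Longrightarrow> 0 \<le> p \<Longrightarrow> d powr p \<le> (1::real)"
  using powr_mono2[of p d 1] by simp

lemma pointwise:
  assumes "0 < xi" "xi < 1" "0 < p" "z w0" "w0 \<le> 0" "\<forall>m. \<exists>j>m. z j"
    "\<forall>j. j \<noteq> k \<longrightarrow> fst x' j = \<omega> j \<and> snd x' j = z j"
  shows "ennreal (dDelta xi (gmap A (\<omega>,z)) (gmap A x') powr p) \<le> Fk xi p k z"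
proof -
  obtain \<omega>' z' where x': "x' = (\<omega>',z')" by (cases x')
  have agr: "\<forall>j. j \<noteq> k \<longrightarrow> z' j = z j" "\<And>j. j \<noteq> k \<Longrightarrow> \<omega>' j = \<omega> j" using assms(7) x' by auto
  let ?d = "dDelta xi (gmap A (\<omega>,z)) (gmap A x')"
  have d01: "0 \<le> ?d \<and> ?d \<le> 1" using assms by (intro dDelta_01) auto
  have d1: "?d powr p \<le> 1" using d01 assms by (intro powr_le_1) auto
  consider "k < 0" | "k = 0" | "0 < k" by linarith
  then show ?thesis
  proof cases
    case 1
    show ?thesis
    proof (cases "\<exists>j. k < j \<and> j \<le> 0 \<and> z j")
      case True
      then obtain w where w: "k < w" "w \<le> 0" "z w" by auto
      have ts: "tseq z' n = tseq z n \<and> k < tseq z n" for n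
        by (rule tseq_neg[OF 1 agr(1) w assms(6)])
      have om: "\<omega>' (tseq z n) = \<omega> (tseq z n)" for n using ts[of n] agr(2) by auto
      have "gmap A x' = gmap A (\<omega>,z)" unfolding gmap_def x' Let_def using ts om by (simp del: tseq.simps)
      then have "?d = 0" by (simp add: dDelta_def dX_def)
      then show ?thesis using assms(3) by simp
    next
      case False
      then have "Fk xi p k z = 1" using 1 by (auto simp: Fk_def intro!: prod.neutral)
      then show ?thesis using d1 by simp
    qed
  next
    case 2
    then show ?thesis using d1 by (simp add: Fk_def)
  next
    case 3
    define N where "N = cnt z (k - 1)"
    have ts: "n \<le> N \<Longrightarrow> tseq z' n = tseq z n \<and> tseq z n < k \<and> cnt z (tseq z n) \<le> n" for n
      unfolding N_def by (rule tseq_pos[OF 3 agr(1) assms(5,4)])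
    have om: "n \<le> N \<Longrightarrow> \<omega>' (tseq z n) = \<omega> (tseq z n)" for n using ts[of n] agr(2) by auto
    have snd_eq: "snd (gmap A (\<omega>,z)) = snd (gmap A x')" unfolding gmap_def x' Let_def using ts[of 0] by (simp del: tseq.simps)
    have fst_eq: "\<forall>j<N. fst (gmap A (\<omega>,z)) j = fst (gmap A x') j"
      unfolding gmap_def x' Let_def using ts om by (auto simp: Suc_le_eq simp del: tseq.simps)
    have "?d \<le> xi ^ N" unfolding dDelta_def using snd_eq fst_eq assms
      by (auto intro!: dX_le)
    then have "?d powr p \<le> (xi ^ N) powr p" using d01 assms by (intro powr_mono2) auto
    also have "\<dots> = (xi powr p) ^ N"
      using assms by (simp add: powr_realpow[symmetric] powr_powr powr_power mult.commute)
    finally have dle: "?d powr p \<le> (xi powr p) ^ N" .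
    have fin: "finite {0<..<k}" by simp
    have set_eq: "{0<..<k} \<inter> {j. z j} = {j. 0 < j \<and> j \<le> k - 1 \<and> z j}" by auto
    have "Fk xi p k z = (\<Prod>j\<in>{0<..<k} \<inter> {j. z j}. ennreal (xi powr p)) * (\<Prod>j\<in>{0<..<k} \<inter> - {j. z j}. 1)"
      using 3 by (simp add: Fk_def prod.If_cases[OF fin])
    also have "\<dots> = ennreal ((xi powr p) ^ N)"
      by (simp add: set_eq N_def cnt_def ennreal_power)
    finally show ?thesis using dle by (simp add: ennreal_leI)
  qed
qed



lemma measurable_Fk[measurable]: "Fk xi p k \<in> borel_measurable (BZ \<theta>)"
  unfolding Fk_def by measurable

lemma null_none:
  assumes "prob_space M" "0 < \<theta>" "\<theta> \<le> 1" "infinite S"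
  shows "{x\<in>space (PD M \<theta>). \<forall>j\<in>S. \<not> snd x j} \<in> null_sets (PD M \<theta>)"
proof -
  let ?A = "{x\<in>space (PD M \<theta>). \<forall>j\<in>S. \<not> snd x j}"
  have meas: "?A \<in> sets (PD M \<theta>)" unfolding PD_def by measurable
  have bound: "emeasure (PD M \<theta>) ?A \<le> ennreal ((1 - \<theta>) ^ n)" for n
  proof -
    obtain T where T: "T \<subseteq> S" "finite T" "card T = n"
      using infinite_arbitrarily_large[OF assms(4)] by blast
    let ?B = "{x\<in>space (PD M \<theta>). \<forall>j\<in>T. \<not> snd x j}"
    have measB: "?B \<in> sets (PD M \<theta>)" unfolding PD_def by measurable
    have "emeasure (PD M \<theta>) ?A \<le> emeasure (PD M \<theta>) ?B"
      by (rule emeasure_mono) (use T measB in auto)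
    also have "\<dots> = (\<integral>\<^sup>+x. indicator ?B x \<partial>PD M \<theta>)" using measB by simp
    also have "\<dots> = (\<integral>\<^sup>+x. (\<Prod>j\<in>T. (if snd x j then 0 else 1::ennreal)) \<partial>PD M \<theta>)"
    proof (rule nn_integral_cong)
      fix x assume "x \<in> space (PD M \<theta>)"
      then show "indicator ?B x = (\<Prod>j\<in>T. (if snd x j then 0 else 1::ennreal))"
        using T(2) by (cases "\<forall>j\<in>T. \<not> snd x j") (auto simp: indicator_def)
    qed
    also have "\<dots> = (\<integral>\<^sup>+z. (\<Prod>j\<in>T. (if z j then 0 else 1::ennreal)) \<partial>BZ \<theta>)"
      by (rule int_pair[OF assms(1)]) measurable
    also have "\<dots> = ennreal ((1 - \<theta>) ^ n)"
      using assms T by (subst int_prod) (auto simp: ennreal_power)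
    finally show ?thesis .
  qed
  have lim: "(\<lambda>n. ennreal ((1 - \<theta>) ^ n)) \<longlonglongrightarrow> ennreal 0"
    by (rule tendsto_ennrealI, rule LIMSEQ_power_zero) (use assms in auto)
  have "emeasure (PD M \<theta>) ?A \<le> ennreal 0"
    by (rule LIMSEQ_le_const[OF lim]) (use bound in auto)
  then show ?thesis using meas by auto
qed

lemma AE_good:
  assumes "prob_space M" "0 < \<theta>" "\<theta> \<le> 1"
  shows "AE x in PD M \<theta>. (\<exists>j\<le>0. snd x j) \<and> (\<forall>m. \<exists>j>m. snd x j)"
proof -
  have inf1: "infinite {..(0::int)}" by (simp add: infinite_Iic)
  have inf2: "infinite {(m::int)<..}" for m by (simp add: infinite_Ioi)
  have "AE x in PD M \<theta>. (\<exists>j\<le>0. snd x j)"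
    by (rule AE_I'[OF null_none[OF assms inf1]]) auto
  moreover have "AE x in PD M \<theta>. (\<forall>m. \<exists>j>m. snd x j)"
    unfolding AE_all_countable
    by (intro allI AE_I'[OF null_none[OF assms inf2]]) auto
  ultimately show ?thesis by auto
qed



lemma delta_le:
  assumes "0 < xi" "xi < 1" "0 < \<theta>" "\<theta> < 1" "prob_space M" "0 < p"
  shows "delta xi p M \<theta> A k \<le> (\<integral>\<^sup>+z. Fk xi p k z \<partial>BZ \<theta>)"
proof -
  have "delta xi p M \<theta> A k \<le> (\<integral>\<^sup>+x. Fk xi p k (snd x) \<partial>PD M \<theta>)"
    unfolding delta_def
  proof (rule nn_integral_mono_AE)
    have ae: "AE x in PD M \<theta>. (\<exists>j\<le>0. snd x j) \<and> (\<forall>m. \<exists>j>m. snd x j)"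
      using AE_good[OF assms(5,3)] assms(4) by simp
    have pw: "(SUP x'\<in>Dk M \<theta> k x. ennreal (dDelta xi (gmap A x) (gmap A x') powr p)) \<le> Fk xi p k (snd x)"
      if g: "(\<exists>j\<le>0. snd x j) \<and> (\<forall>m. \<exists>j>m. snd x j)" for x
    proof -
      obtain \<omega> z where x: "x = (\<omega>, z)" by (cases x)
      from g x obtain w0 where w0: "w0 \<le> 0" "z w0" by auto
      show ?thesis
      proof (rule SUP_least)
        fix x' assume "x' \<in> Dk M \<theta> k x"
        then have "\<forall>j. j \<noteq> k \<longrightarrow> fst x' j = \<omega> j \<and> snd x' j = z j" by (auto simp: Dk_def x)
        then show "ennreal (dDelta xi (gmap A x) (gmap A x') powr p) \<le> Fk xi p k (snd x)"
          using pointwise[of xi p z w0 k x' \<omega> A] assms(1,2,6) w0 g x by auto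
      qed
    qed
    show "AE x in PD M \<theta>. (SUP x'\<in>Dk M \<theta> k x. ennreal (dDelta xi (gmap A x) (gmap A x') powr p)) \<le> Fk xi p k (snd x)"
      using eventually_mono[OF ae pw] .
  qed
  also have "\<dots> = (\<integral>\<^sup>+z. Fk xi p k z \<partial>BZ \<theta>)" by (rule int_pair[OF assms(5)]) measurable
  finally show ?thesis .
qed

lemma int_Fk:
  assumes "0 \<le> \<theta>" "\<theta> \<le> 1"
  shows "(\<integral>\<^sup>+z. Fk xi p k z \<partial>BZ \<theta>) =
    (if k < 0 then ennreal ((1 - \<theta>) ^ nat (- k))
     else if 0 < k then ennreal ((1 - \<theta> + \<theta> * xi powr p) ^ (nat k - 1)) else 1)"
proof -
  consider "k < 0" | "k = 0" | "0 < k" by linarith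
  then show ?thesis
  proof cases
    case 1
    have "(\<integral>\<^sup>+z. Fk xi p k z \<partial>BZ \<theta>) = (\<integral>\<^sup>+z. (\<Prod>j\<in>{k<..0}. if z j then 0 else 1) \<partial>BZ \<theta>)"
      by (simp add: Fk_def 1)
    also have "\<dots> = ennreal ((1 - \<theta>) ^ nat (- k))"
      using assms by (subst int_prod) (simp_all add: ennreal_power)
    finally show ?thesis using 1 by simp
  next
    case 2 then show ?thesis using int_prod[of "{}" \<theta> "\<lambda>_. 1"] assms by (simp add: Fk_def)
  next
    case 3
    have "(\<integral>\<^sup>+z. Fk xi p k z \<partial>BZ \<theta>) = (\<Prod>j\<in>{0<..<k}. ennreal (xi powr p) * ennreal \<theta> + 1 * ennreal (1 - \<theta>))"
    proof -
      have "(\<integral>\<^sup>+z. Fk xi p k z \<partial>BZ \<theta>) = (\<integral>\<^sup>+z. (\<Prod>j\<in>{0<..<k}. if z j then ennreal (xi powr p) else 1) \<partial>BZ \<theta>)"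
        using 3 by (simp add: Fk_def)
      also have "\<dots> = (\<Prod>j\<in>{0<..<k}. ennreal (xi powr p) * ennreal \<theta> + 1 * ennreal (1 - \<theta>))"
        using assms by (subst int_prod) simp_all
      finally show ?thesis .
    qed
    also have "\<dots> = (ennreal (xi powr p) * ennreal \<theta> + 1 * ennreal (1 - \<theta>)) ^ (nat k - 1)"
    proof -
      have "nat (k - 1) = nat k - 1" using 3 by simp
      then show ?thesis by (simp only: prod_constant) simp
    qed
    also have "ennreal (xi powr p) * ennreal \<theta> + 1 * ennreal (1 - \<theta>) = ennreal (1 - \<theta> + \<theta> * xi powr p)"
    proof -
      have "ennreal (1 - \<theta> + \<theta> * xi powr p) = ennreal (1 - \<theta>) + ennreal (\<theta> * xi powr p)"
        using assms by (intro ennreal_plus) auto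
      also have "ennreal (\<theta> * xi powr p) = ennreal \<theta> * ennreal (xi powr p)"
        using assms by (intro ennreal_mult) auto
      finally show ?thesis by (simp add: add.commute mult.commute)
    qed
    also have "(ennreal (1 - \<theta> + \<theta> * xi powr p)) ^ (nat k - 1) = ennreal ((1 - \<theta> + \<theta> * xi powr p) ^ (nat k - 1))"
      by (rule ennreal_power) (use assms in auto)
    finally show ?thesis using 3 by simp
  qed
qed



theorem proposition5p1:
  fixes PA :: "'a::countable pmf" and hA :: "'a \<Rightarrow> nat" and xi \<theta> p :: real
    and M :: "'o measure" and A :: "nat \<Rightarrow> 'o \<Rightarrow> 'a"
  assumes "0 < xi" "xi < 1" "0 < \<theta>" "\<theta> < 1"
    and "integrable (measure_pmf PA) (\<lambda>a. real (hA a))"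
    and "\<forall>n\<ge>1. measure_pmf.prob PA {a. hA a = n} = \<theta> * (1 - \<theta>) ^ (n - 1)"
    and "prob_space M"
    and "\<forall>n\<ge>1. A n \<in> M \<rightarrow>\<^sub>M count_space UNIV"
    and "\<forall>n\<ge>1. \<forall>a. measure M {\<omega> \<in> space M. A n \<omega> = a} =
           (if hA a = n then pmf PA a / measure_pmf.prob PA {b. hA b = n} else 0)"
    and "p > 2"
  shows "\<exists>C>0. \<exists>td. 0 < td \<and> td < 1 \<and>
           (\<forall>k::int. delta xi p M \<theta> A k \<le> ennreal (C * td ^ nat \<bar>k\<bar>))"
proof -
  define r where "r = 1 - \<theta> + \<theta> * xi powr p"
  have xp0: "0 < xi powr p" using assms(1) by simp
  have xp1: "xi powr p < 1" using powr_less_mono2[of p xi 1] assms by simp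
  have "0 < \<theta> * xi powr p" using xp0 assms(3) by simp
  then have r0: "0 < r" using assms(4) by (simp add: r_def)
  have "\<theta> * xi powr p < \<theta>" using xp1 assms(3) by simp
  then have r1: "r < 1" by (simp add: r_def)
  have r2: "1 - \<theta> \<le> r" using \<open>0 < \<theta> * xi powr p\<close> by (simp add: r_def)
  show ?thesis
  proof (intro exI conjI allI)
    show "0 < 1 / r" "0 < r" "r < 1" using r0 r1 by auto
    fix k :: int
    have "delta xi p M \<theta> A k \<le> (\<integral>\<^sup>+z. Fk xi p k z \<partial>BZ \<theta>)"
      using assms by (intro delta_le) auto
    also have "\<dots> = (if k < 0 then ennreal ((1 - \<theta>) ^ nat (- k))
     else if 0 < k then ennreal (r ^ (nat k - 1)) else 1)"
      using assms(3,4) by (simp add: int_Fk r_def)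
    also have "\<dots> \<le> ennreal (1 / r * r ^ nat \<bar>k\<bar>)"
    proof -
      consider "k < 0" | "k = 0" | "0 < k" by linarith
      then show ?thesis
      proof cases
        case 1
        have "(1 - \<theta>) ^ nat (- k) \<le> r ^ nat (- k)"
          using r2 assms(4) by (intro power_mono) auto
        also have "\<dots> \<le> 1 / r * r ^ nat (- k)"
          using r0 r1 by (simp add: field_simps)
        finally show ?thesis using 1 by (simp add: ennreal_leI)
      next
        case 2 then show ?thesis using r0 r1 by (simp add: field_simps)
      next
        case 3
        then obtain m where m: "nat k = Suc m" by (metis gr0_implies_Suc zero_less_nat_eq)
        have "r ^ (nat k - 1) = 1 / r * r ^ nat \<bar>k\<bar>"
          using 3 m r0 by simp
        then show ?thesis using 3 by simp
      qed
    qed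
    finally show "delta xi p M \<theta> A k \<le> ennreal (1 / r * r ^ nat \<bar>k\<bar>)" .
  qed
qed

end
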